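(* Let $F$ be a field and $A$ a unital $F$-algebra. The following are equivalent: (i) $A$ is von-Neumann finite; (ii) every subalgebra of $A$ generated by at most two elements is von-Neumann finite; (iii) any two elements $a,b\in A$ with $ab\in F\setminus\{0\}$ (i.e. $ab$ a nonzero scalar multiple of $1$) commute. Likewise, the following are equivalent: (i') $A$ is reversible; (ii') every subalgebra of $A$ generated by at most two elements is reversible; (iii') any two elements $a,b\in A$ with $ab=0$ commute.
   Context: An $F$-algebra is a vector space with bilinear, not necessarily associative, multiplication; subalgebras are unital subalgebras. $A$ is von-Neumann finite if $ab=1$ implies $ba=1$, and reversible if $ab=0$ implies $ba=0$, for all $a,b\in A$. *)

theory Defs
  imports Main "HOL.Vector_Spaces"
begin

text \<open>A unital (not necessarily associative) algebra over a field: a vector space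
  given by the scalar multiplication scale, with a bilinear multiplication mul
  and a two-sided unit one.\<close>
definition unital_algebra ::
  "('f::field \<Rightarrow> 'a::ab_group_add \<Rightarrow> 'a) \<Rightarrow> ('a \<Rightarrow> 'a \<Rightarrow> 'a) \<Rightarrow> 'a \<Rightarrow> bool" where
  "unital_algebra scale mul one \<longleftrightarrow>
     vector_space scale \<and>
     (\<forall>x y z. mul (x + y) z = mul x z + mul y z) \<and>
     (\<forall>x y z. mul x (y + z) = mul x y + mul x z) \<and>
     (\<forall>c x y. mul (scale c x) y = scale c (mul x y)) \<and>
     (\<forall>c x y. mul x (scale c y) = scale c (mul x y)) \<and>
     (\<forall>x. mul one x = x \<and> mul x one = x)"

definition subalgebra ::
  "('f::field \<Rightarrow> 'a::ab_group_add \<Rightarrow> 'a) \<Rightarrow> ('a \<Rightarrow> 'a \<Rightarrow> 'a) \<Rightarrow> 'a \<Rightarrow> 'a set \<Rightarrow> bool" where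
  "subalgebra scale mul one S \<longleftrightarrow>
     module.subspace scale S \<and> one \<in> S \<and> (\<forall>x\<in>S. \<forall>y\<in>S. mul x y \<in> S)"

definition gen_subalgebra ::
  "('f::field \<Rightarrow> 'a::ab_group_add \<Rightarrow> 'a) \<Rightarrow> ('a \<Rightarrow> 'a \<Rightarrow> 'a) \<Rightarrow> 'a \<Rightarrow> 'a set \<Rightarrow> 'a set" where
  "gen_subalgebra scale mul one X = \<Inter>{S. subalgebra scale mul one S \<and> X \<subseteq> S}"

definition vN_finite_on :: "('a \<Rightarrow> 'a \<Rightarrow> 'a) \<Rightarrow> 'a \<Rightarrow> 'a set \<Rightarrow> bool" where
  "vN_finite_on mul one S \<longleftrightarrow> (\<forall>a\<in>S. \<forall>b\<in>S. mul a b = one \<longrightarrow> mul b a = one)"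

definition reversible_on :: "('a::zero \<Rightarrow> 'a \<Rightarrow> 'a) \<Rightarrow> 'a set \<Rightarrow> bool" where
  "reversible_on mul S \<longleftrightarrow> (\<forall>a\<in>S. \<forall>b\<in>S. mul a b = 0 \<longrightarrow> mul b a = 0)"

end

theory Submission
  imports Defs
begin

lemma gen_mem:
  "x \<in> X \<Longrightarrow> x \<in> gen_subalgebra scale mul one X"
  unfolding gen_subalgebra_def by blast

theorem lemma3p3:
  fixes scale :: "'f::field \<Rightarrow> 'a::ab_group_add \<Rightarrow> 'a"
    and mul :: "'a \<Rightarrow> 'a \<Rightarrow> 'a" and one :: 'a
  assumes "unital_algebra scale mul one"
  shows "(vN_finite_on mul one UNIV \<longleftrightarrow>
            (\<forall>a b. vN_finite_on mul one (gen_subalgebra scale mul one {a, b})))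
       \<and> (vN_finite_on mul one UNIV \<longleftrightarrow>
            (\<forall>a b. (\<exists>c. c \<noteq> 0 \<and> mul a b = scale c one) \<longrightarrow> mul a b = mul b a))
       \<and> (reversible_on mul UNIV \<longleftrightarrow>
            (\<forall>a b. reversible_on mul (gen_subalgebra scale mul one {a, b})))
       \<and> (reversible_on mul UNIV \<longleftrightarrow>
            (\<forall>a b. mul a b = 0 \<longrightarrow> mul a b = mul b a))"
proof -
  have vs: "vector_space scale" and ml: "\<And>c x y. mul (scale c x) y = scale c (mul x y)"
    and mr: "\<And>c x y. mul x (scale c y) = scale c (mul x y)"
    using assms unfolding unital_algebra_def by auto
  have ss: "\<And>c d x. scale c (scale d x) = scale (c * d) x"
    using vs by (simp add: vector_space.vector_space_assms(3))
  have s1: "\<And>x. scale 1 x = x" using vs by (simp add: vector_space.vector_space_assms(4))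
  have A: "vN_finite_on mul one UNIV \<longleftrightarrow>
            (\<forall>a b. vN_finite_on mul one (gen_subalgebra scale mul one {a, b}))"
    unfolding vN_finite_on_def
    by (metis UNIV_I gen_mem[of a "{a,b}" for a b] gen_mem[of b "{a,b}" for a b] insertI1 insert_commute)
  have B: "vN_finite_on mul one UNIV \<longleftrightarrow>
            (\<forall>a b. (\<exists>c. c \<noteq> 0 \<and> mul a b = scale c one) \<longrightarrow> mul a b = mul b a)"
  proof
    assume h: "vN_finite_on mul one UNIV"
    show "\<forall>a b. (\<exists>c. c \<noteq> 0 \<and> mul a b = scale c one) \<longrightarrow> mul a b = mul b a"
    proof (intro allI impI)
      fix a b assume "\<exists>c. c \<noteq> 0 \<and> mul a b = scale c one"
      then obtain c where c: "c \<noteq> 0" "mul a b = scale c one" by blast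
      have "mul (scale (inverse c) a) b = one"
        using c by (simp only: ml ss) (simp add: s1)
      hence "mul b (scale (inverse c) a) = one" using h unfolding vN_finite_on_def by blast
      hence "scale c (mul b (scale (inverse c) a)) = scale c one" by simp
      hence "mul b a = scale c one" using c by (simp only: mr ss) (simp add: s1)
      thus "mul a b = mul b a" using c by simp
    qed
  next
    assume h: "\<forall>a b. (\<exists>c. c \<noteq> 0 \<and> mul a b = scale c one) \<longrightarrow> mul a b = mul b a"
    show "vN_finite_on mul one UNIV"
      unfolding vN_finite_on_def
    proof (intro ballI impI)
      fix a b assume "mul a b = one"
      hence "\<exists>c. c \<noteq> 0 \<and> mul a b = scale c one" by (intro exI[of _ 1]) (simp add: s1)
      thus "mul b a = one" using h \<open>mul a b = one\<close> by metis
    qed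
  qed
  have C: "reversible_on mul UNIV \<longleftrightarrow>
            (\<forall>a b. reversible_on mul (gen_subalgebra scale mul one {a, b}))"
    unfolding reversible_on_def
    by (metis UNIV_I gen_mem[of a "{a,b}" for a b] gen_mem[of b "{a,b}" for a b] insertI1 insert_commute)
  have D: "reversible_on mul UNIV \<longleftrightarrow>
            (\<forall>a b. mul a b = 0 \<longrightarrow> mul a b = mul b a)"
    unfolding reversible_on_def by auto
  show ?thesis using A B C D by blast
qed

end
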